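(* Let $X\subseteq W$ be a block subspace, $(y_0,y_1,y_2,\dots)$ a block sequence in $W$, $\alpha<\omega_1$ and $K\ge1$. Assume that II has a strategy in $F^{\omega\cdot\alpha}_X$ to play $(x_0,\dots,x_k)$ such that $(x_0,\dots,x_k)\sim_K(y_0,\dots,y_k)$. Then for every block sequence $(z_n)$ in $[y_n]$, II has a strategy in $F^\alpha_X$ to play $(v_0,\dots,v_k)$ such that $(v_0,\dots,v_k)\sim_K(z_0,\dots,z_k)$.
   Context: Let $\mathcal W$ be a real Banach space with Schauder basis $(e_n)$. Fix a countable subfield $\mathfrak F\subseteq\mathbb R$ such that $\|\sum_{n\le m}a_ne_n\|\in\mathfrak F$ whenever all $a_n\in\mathfrak F$, and let $W$ be the $\mathfrak F$-vector space of finite $\mathfrak F$-linear combinations of the $e_n$, with the norm of $\mathcal W$; subspaces and spans $[\cdot]$ are $\mathfrak F$-linear in $W$. For nonzero $x=\sum a_ne_n$, ${\rm supp}(x)=\{n:a_n\neq0\}$, and $x<y$ means $\max{\rm supp}(x)<\min{\rm supp}(y)$. A block sequence is a sequence of nonzero vectors $x_0<x_1<\dots$; a block subspace is the span of an infinite block sequence. $[e_i]_{i>n}$ is the span of $\{e_i:i>n\}$. $(x_i)_{i\le k}\sim_K(y_i)_{i\le k}$ means $\frac1K\|\sum a_ix_i\|\le\|\sum a_iy_i\|\le K\|\sum a_ix_i\|$ for all real $a_i$. $\omega\cdot\alpha$ is ordinal multiplication. Game $F^\gamma_X$ ($\gamma$ countable ordinal): in rounds $l=0,1,\dots$, I plays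 an integer $n_l$ and an ordinal $\xi_l$ ($\xi_0<\gamma$, $\xi_l<\xi_{l-1}$); II responds with a finite-dimensional $F_l\subseteq X\cap[e_i]_{i>n_l}$ and a nonzero $x_l\in F_0+\dots+F_l$; it ends after II's response to $\xi_k=0$ (immediately if $\gamma=0$), with outcome $(x_0,\dots,x_k)$. "II has a strategy to play ... such that P" means II can ensure the outcome satisfies P. *)

theory Defs
  imports "HOL-Analysis.Analysis"
begin

definition schauder_basis :: "(nat \<Rightarrow> 'a::banach) \<Rightarrow> bool" where
  "schauder_basis e \<longleftrightarrow>
     (\<forall>x. \<exists>!a::nat \<Rightarrow> real. (\<lambda>m. \<Sum>i<m. a i *\<^sub>R e i) \<longlonglongrightarrow> x)"

definition subfield_real :: "real set \<Rightarrow> bool" where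
  "subfield_real F \<longleftrightarrow> 0 \<in> F \<and> 1 \<in> F \<and>
     (\<forall>a\<in>F. \<forall>b\<in>F. a + b \<in> F \<and> a * b \<in> F) \<and>
     (\<forall>a\<in>F. - a \<in> F) \<and> (\<forall>a\<in>F. a \<noteq> 0 \<longrightarrow> inverse a \<in> F)"

definition spanF :: "real set \<Rightarrow> ('a::real_vector) set \<Rightarrow> 'a set" where
  "spanF F S = {\<Sum>i<(m::nat). c i *\<^sub>R v i | m c v. \<forall>i<m. c i \<in> F \<and> v i \<in> S}"

definition Wsp :: "(nat \<Rightarrow> 'a::real_vector) \<Rightarrow> real set \<Rightarrow> 'a set" where
  "Wsp e F = spanF F (range e)"

definition coeffs :: "(nat \<Rightarrow> 'a::real_normed_vector) \<Rightarrow> 'a \<Rightarrow> nat \<Rightarrow> real" where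
  "coeffs e x = (THE a. (\<lambda>m. \<Sum>i<m. a i *\<^sub>R e i) \<longlonglongrightarrow> x)"

definition supp :: "(nat \<Rightarrow> 'a::real_normed_vector) \<Rightarrow> 'a \<Rightarrow> nat set" where
  "supp e x = {n. coeffs e x n \<noteq> 0}"

definition block_less :: "(nat \<Rightarrow> 'a::real_normed_vector) \<Rightarrow> 'a \<Rightarrow> 'a \<Rightarrow> bool" where
  "block_less e x y \<longleftrightarrow> Max (supp e x) < Min (supp e y)"

definition block_seq :: "(nat \<Rightarrow> 'a::real_normed_vector) \<Rightarrow> real set \<Rightarrow> (nat \<Rightarrow> 'a) \<Rightarrow> bool" where
  "block_seq e F x \<longleftrightarrow>
     (\<forall>n. x n \<in> Wsp e F \<and> x n \<noteq> 0 \<and> block_less e (x n) (x (Suc n)))"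

definition block_subspace :: "(nat \<Rightarrow> 'a::real_normed_vector) \<Rightarrow> real set \<Rightarrow> 'a set \<Rightarrow> bool" where
  "block_subspace e F X \<longleftrightarrow> (\<exists>x. block_seq e F x \<and> X = spanF F (range x))"

definition tail_space :: "(nat \<Rightarrow> 'a::real_vector) \<Rightarrow> real set \<Rightarrow> int \<Rightarrow> 'a set" where
  "tail_space e F n = spanF F (e ` {i. int i > n})"

definition fd_subspace :: "real set \<Rightarrow> ('a::real_vector) set \<Rightarrow> bool" where
  "fd_subspace F S \<longleftrightarrow> (\<exists>B. finite B \<and> S = spanF F B)"

definition equivK :: "real \<Rightarrow> 'a::real_normed_vector list \<Rightarrow> 'a list \<Rightarrow> bool" where
  "equivK K xs ys \<longleftrightarrow> length xs = length ys \<and>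
     (\<forall>a::nat \<Rightarrow> real.
        (1 / K) * norm (\<Sum>i<length xs. a i *\<^sub>R xs ! i) \<le> norm (\<Sum>i<length ys. a i *\<^sub>R ys ! i) \<and>
        norm (\<Sum>i<length ys. a i *\<^sub>R ys ! i) \<le> K * norm (\<Sum>i<length xs. a i *\<^sub>R xs ! i))"

text \<open>Ordinals are represented by well-orders (Main's BNF well-order library), compared by
  ordLess; the ordinal 0 is a well-order with empty field.  The ordinal product omega * alpha
  is the order type of alpha x omega ordered lexicographically with the alpha-coordinate major.\<close>

definition omega_times :: "'o rel \<Rightarrow> ('o \<times> nat) rel" where
  "omega_times \<alpha> = {((a, n), (b, m)). a \<in> Field \<alpha> \<and> b \<in> Field \<alpha> \<and>
       (((a, b) \<in> \<alpha> \<and> a \<noteq> b) \<or> (a = b \<and> n \<le> m))}"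

definition ord_zero :: "'o rel \<Rightarrow> bool" where
  "ord_zero \<xi> \<longleftrightarrow> Field \<xi> = {}"

text \<open>A move of player I is a pair (n, xi) of an integer and an ordinal; ordinals below gamma
  are represented as well-orders on the same carrier type as gamma (every ordinal below gamma is
  isomorphic to an initial segment of gamma).  legal_I gamma ms: the list ms of I's moves obeys
  the rules (xi_0 < gamma, xi_l < xi_(l-1), and the game has not ended before the last move).\<close>

definition legal_I :: "'o rel \<Rightarrow> (int \<times> 'o rel) list \<Rightarrow> bool" where
  "legal_I \<gamma> ms \<longleftrightarrow>
     (\<forall>l<length ms. Well_order (snd (ms ! l)) \<and>
        (if l = 0 then (snd (ms ! 0), \<gamma>) \<in> ordLess
         else (snd (ms ! l), snd (ms ! (l - 1))) \<in> ordLess)) \<and>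
     (\<forall>l. l + 1 < length ms \<longrightarrow> \<not> ord_zero (snd (ms ! l)))"

definition complete_I :: "'o rel \<Rightarrow> (int \<times> 'o rel) list \<Rightarrow> bool" where
  "complete_I \<gamma> ms \<longleftrightarrow> legal_I \<gamma> ms \<and>
     (if ms = [] then ord_zero \<gamma> else ord_zero (snd (last ms)))"

text \<open>A strategy for II maps the list of I's moves so far (l+1 moves) to II's answer (F_l, x_l).\<close>
type_synonym ('o, 'a) strategyII = "(int \<times> 'o rel) list \<Rightarrow> 'a set \<times> 'a"

definition legal_II_answer ::
  "(nat \<Rightarrow> 'a::real_normed_vector) \<Rightarrow> real set \<Rightarrow> 'a set \<Rightarrow> ('o, 'a) strategyII
     \<Rightarrow> (int \<times> 'o rel) list \<Rightarrow> bool" where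
  "legal_II_answer e F X \<sigma> ms \<longleftrightarrow>
     (let l = length ms - 1; Fs = (\<lambda>j. fst (\<sigma> (take (Suc j) ms))); x = snd (\<sigma> ms) in
        fd_subspace F (Fs l) \<and> Fs l \<subseteq> X \<inter> tail_space e F (fst (ms ! l)) \<and>
        x \<noteq> 0 \<and> (\<exists>f. (\<forall>j\<le>l. f j \<in> Fs j) \<and> x = (\<Sum>j\<le>l. f j)))"

definition strategy_II ::
  "(nat \<Rightarrow> 'a::real_normed_vector) \<Rightarrow> real set \<Rightarrow> 'a set \<Rightarrow> 'o rel \<Rightarrow> ('o, 'a) strategyII \<Rightarrow> bool" where
  "strategy_II e F X \<gamma> \<sigma> \<longleftrightarrow>
     (\<forall>ms. ms \<noteq> [] \<and> legal_I \<gamma> ms \<longrightarrow> legal_II_answer e F X \<sigma> ms)"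

definition outcome :: "('o, 'a) strategyII \<Rightarrow> (int \<times> 'o rel) list \<Rightarrow> 'a list" where
  "outcome \<sigma> ms = map (\<lambda>j. snd (\<sigma> (take (Suc j) ms))) [0..<length ms]"

definition II_wins ::
  "(nat \<Rightarrow> 'a::real_normed_vector) \<Rightarrow> real set \<Rightarrow> 'a set \<Rightarrow> 'o rel \<Rightarrow> ('a list \<Rightarrow> bool) \<Rightarrow> bool" where
  "II_wins e F X \<gamma> P \<longleftrightarrow>
     (\<exists>\<sigma>. strategy_II e F X \<gamma> \<sigma> \<and> (\<forall>ms. complete_I \<gamma> ms \<longrightarrow> P (outcome \<sigma> ms)))"

end

theory Submission
  imports Defs
begin


lemma sum_lessThan_add_split:
  fixes f :: "nat \<Rightarrow> 'b::comm_monoid_add"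
  shows "(\<Sum>i<m+n. f i) = (\<Sum>i<m. f i) + (\<Sum>i<n. f (m+i))"
  by (induction n) (auto simp: add.assoc)

lemma spanF_I:
  fixes m :: nat
  assumes "x = (\<Sum>i<m. c i *\<^sub>R v i)" "\<forall>i<m. c i \<in> F \<and> v i \<in> S"
  shows "x \<in> spanF F S"
  unfolding spanF_def using assms by (intro CollectI exI[of _ m] exI[of _ c] exI[of _ v]) simp

lemma spanF_E:
  assumes "x \<in> spanF F S"
  obtains m :: nat and c v where "x = (\<Sum>i<m. c i *\<^sub>R v i)" "\<forall>i<m. c i \<in> F \<and> v i \<in> S"
  using assms unfolding spanF_def by auto

lemma spanF_zero: "0 \<in> spanF F S"
  by (rule spanF_I[where m=0]) auto

lemma spanF_add:
  assumes "x \<in> spanF F S" "y \<in> spanF F S" shows "x + y \<in> spanF F S"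
proof -
  obtain m :: nat and c v where x: "x = (\<Sum>i<m. c i *\<^sub>R v i)" "\<forall>i<m. c i \<in> F \<and> v i \<in> S"
    using assms(1) by (rule spanF_E)
  obtain n :: nat and d w where y: "y = (\<Sum>i<n. d i *\<^sub>R w i)" "\<forall>i<n. d i \<in> F \<and> w i \<in> S"
    using assms(2) by (rule spanF_E)
  define c' where "c' i = (if i < m then c i else d (i - m))" for i
  define v' where "v' i = (if i < m then v i else w (i - m))" for i
  have "x + y = (\<Sum>i<m+n. c' i *\<^sub>R v' i)"
    unfolding sum_lessThan_add_split x y c'_def v'_def by simp
  moreover have "\<forall>i<m+n. c' i \<in> F \<and> v' i \<in> S"
    using x y unfolding c'_def v'_def by auto
  ultimately show ?thesis by (rule spanF_I)
qed

lemma spanF_scale: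
  assumes "subfield_real F" "a \<in> F" "x \<in> spanF F S" shows "a *\<^sub>R x \<in> spanF F S"
proof -
  obtain m :: nat and c v where x: "x = (\<Sum>i<m. c i *\<^sub>R v i)" "\<forall>i<m. c i \<in> F \<and> v i \<in> S"
    using assms(3) by (rule spanF_E)
  have "a *\<^sub>R x = (\<Sum>i<m. (a * c i) *\<^sub>R v i)"
    unfolding x by (simp add: scaleR_sum_right)
  moreover have "\<forall>i<m. a * c i \<in> F \<and> v i \<in> S"
    using x assms(1,2) unfolding subfield_real_def by auto
  ultimately show ?thesis by (rule spanF_I)
qed

lemma spanF_sum:
  assumes "finite I" "\<And>i. i \<in> I \<Longrightarrow> f i \<in> spanF F S"
  shows "sum f I \<in> spanF F S"
  using assms by (induction I rule: finite_induct) (auto simp: spanF_zero spanF_add)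

lemma spanF_base:
  assumes "subfield_real F" "v \<in> S" shows "v \<in> spanF F S"
proof -
  have "v = (\<Sum>i<(1::nat). (\<lambda>_. 1) i *\<^sub>R (\<lambda>_. v) i)" by simp
  moreover have "\<forall>i<(1::nat). (\<lambda>_. 1::real) i \<in> F \<and> (\<lambda>_. v) i \<in> S"
    using assms unfolding subfield_real_def by auto
  ultimately show ?thesis by (rule spanF_I)
qed

lemma spanF_mono: "S \<subseteq> T \<Longrightarrow> spanF F S \<subseteq> spanF F T"
  unfolding spanF_def by blast

lemma spanF_span_sub:
  assumes "subfield_real F" "S \<subseteq> spanF F T" shows "spanF F S \<subseteq> spanF F T"
proof
  fix x assume "x \<in> spanF F S"
  then obtain m :: nat and c v where x: "x = (\<Sum>i<m. c i *\<^sub>R v i)" "\<forall>i<m. c i \<in> F \<and> v i \<in> S"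
    by (rule spanF_E)
  show "x \<in> spanF F T" unfolding x
    by (rule spanF_sum) (use x assms in \<open>auto intro: spanF_scale\<close>)
qed

lemma F_sum:
  assumes "subfield_real F" "finite I" "\<And>i. i \<in> I \<Longrightarrow> f i \<in> F"
  shows "sum f I \<in> F"
  using assms(2,3) by (induction I rule: finite_induct) (use assms(1) in \<open>auto simp: subfield_real_def\<close>)


lemma spanF_rep:
  fixes y :: "nat \<Rightarrow> 'a::real_vector"
  assumes "subfield_real F" "x \<in> spanF F (range y)"
  shows "\<exists>c M. (\<forall>j. c j \<in> F) \<and> (\<forall>j\<ge>M. c j = 0) \<and> x = (\<Sum>j<M. c j *\<^sub>R y j)"
proof -
  obtain m :: nat and c v where x: "x = (\<Sum>i<m. c i *\<^sub>R v i)" "\<forall>i<m. c i \<in> F \<and> v i \<in> range y"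
    using assms(2) by (rule spanF_E)
  define p where "p i = inv y (v i)" for i
  have p: "v i = y (p i)" if "i < m" for i using x(2) that unfolding p_def
    by (simp add: f_inv_into_f)
  define d where "d j = (\<Sum>i\<in>{i. i \<in> {..<m} \<and> p i = j}. c i)" for j
  define M where "M = Suc (Max (p ` {..<m}))"
  have pM: "p i < M" if "i < m" for i unfolding M_def using that by (simp add: le_imp_less_Suc)
  have "\<forall>j. d j \<in> F" unfolding d_def using x(2) by (auto intro!: F_sum assms(1))
  moreover have "\<forall>j\<ge>M. d j = 0"
  proof (intro allI impI)
    fix j assume "M \<le> j"
    then have em: "{i. i \<in> {..<m} \<and> p i = j} = {}" using pM by fastforce
    show "d j = 0" by (simp only: d_def em sum.empty)
  qed
  moreover have "x = (\<Sum>j<N. d j *\<^sub>R y j)" if "N \<ge> M" for N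
  proof -
    have e1: "d j *\<^sub>R y j = (\<Sum>i\<in>{i. i \<in> {..<m} \<and> p i = j}. c i *\<^sub>R y (p i))" for j
      unfolding d_def scaleR_sum_left by (rule sum.cong) auto
    have "p ` {..<m} \<subseteq> {..<N}" using pM that by fastforce
    then have "(\<Sum>j<N. \<Sum>i\<in>{i. i \<in> {..<m} \<and> p i = j}. c i *\<^sub>R y (p i)) = (\<Sum>i<m. c i *\<^sub>R y (p i))"
      by (intro sum.group) auto
    also have "\<dots> = x" unfolding x(1) using p by (intro sum.cong) auto
    finally show ?thesis unfolding e1 by simp
  qed
  ultimately show ?thesis by blast
qed




lemma WO_facts:
  assumes "Well_order r"
  shows "\<And>a. a \<in> Field r \<Longrightarrow> (a,a) \<in> r"
    and "\<And>a b c. (a,b) \<in> r \<Longrightarrow> (b,c) \<in> r \<Longrightarrow> (a,c) \<in> r"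
    and "\<And>a b. (a,b) \<in> r \<Longrightarrow> (b,a) \<in> r \<Longrightarrow> a = b"
    and "\<And>a b. a \<in> Field r \<Longrightarrow> b \<in> Field r \<Longrightarrow> a \<noteq> b \<Longrightarrow> (a,b) \<in> r \<or> (b,a) \<in> r"
    and "wf (r - Id)"
  using assms unfolding well_order_on_def linear_order_on_def partial_order_on_def
    preorder_on_def refl_on_def trans_def antisym_def total_on_def
  by blast+

lemma Field_omega_times:
  assumes "Well_order \<alpha>"
  shows "Field (omega_times \<alpha>) = Field \<alpha> \<times> UNIV"
proof
  show "Field (omega_times \<alpha>) \<subseteq> Field \<alpha> \<times> UNIV"
    unfolding omega_times_def Field_def by auto
  show "Field \<alpha> \<times> UNIV \<subseteq> Field (omega_times \<alpha>)"
  proof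
    fix x assume "x \<in> Field \<alpha> \<times> (UNIV :: nat set)"
    then obtain a n where x: "x = (a,n)" "a \<in> Field \<alpha>" by auto
    then have "(x,x) \<in> omega_times \<alpha>" unfolding omega_times_def by auto
    then show "x \<in> Field (omega_times \<alpha>)" by (auto simp: Field_def)
  qed
qed

lemma Well_order_omega_times:
  assumes W: "Well_order \<alpha>"
  shows "Well_order (omega_times \<alpha>)"
proof -
  note f = WO_facts[OF W]
  let ?W = "omega_times \<alpha>"
  have FW: "Field ?W = Field \<alpha> \<times> UNIV" by (rule Field_omega_times[OF W])
  have refl: "refl_on (Field ?W) ?W"
    unfolding refl_on_def FW by (auto simp: omega_times_def)
  have trans: "trans ?W"
  proof (rule transI)
    fix x y z assume h: "(x,y) \<in> ?W" "(y,z) \<in> ?W"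
    obtain a n where x: "x = (a,n)" by (cases x)
    obtain b m where y: "y = (b,m)" by (cases y)
    obtain c k where z: "z = (c,k)" by (cases z)
    have h1: "a \<in> Field \<alpha>" "b \<in> Field \<alpha>" "((a, b) \<in> \<alpha> \<and> a \<noteq> b) \<or> (a = b \<and> n \<le> m)"
      using h(1) unfolding x y omega_times_def by auto
    have h2: "c \<in> Field \<alpha>" "((b, c) \<in> \<alpha> \<and> b \<noteq> c) \<or> (b = c \<and> m \<le> k)"
      using h(2) unfolding y z omega_times_def by auto
    have "((a, c) \<in> \<alpha> \<and> a \<noteq> c) \<or> (a = c \<and> n \<le> k)"
    proof -
      { assume "(a, b) \<in> \<alpha>" "a \<noteq> b" "(b, c) \<in> \<alpha>" "b \<noteq> c"
        then have ?thesis using f(2)[of a b c] f(3)[of a b] by blast }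
      moreover { assume "(a, b) \<in> \<alpha>" "a \<noteq> b" "b = c"
        then have ?thesis by simp }
      moreover { assume "a = b" "(b, c) \<in> \<alpha>" "b \<noteq> c"
        then have ?thesis by simp }
      moreover { assume "a = b" "n \<le> m" "b = c" "m \<le> k"
        then have ?thesis by simp }
      ultimately show ?thesis using h1(3) h2(2) by blast
    qed
    then show "(x,z) \<in> ?W" unfolding x z omega_times_def using h1 h2 by auto
  qed
  have antisym: "antisym ?W"
    unfolding antisym_def omega_times_def using f(3) by auto
  have total: "total_on (Field ?W) ?W"
  proof (unfold total_on_def, intro ballI impI)
    fix x y assume xy: "x \<in> Field ?W" "y \<in> Field ?W" "x \<noteq> y"
    obtain a n where x: "x = (a,n)" by (cases x)
    obtain b m where y: "y = (b,m)" by (cases y)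
    have ab: "a \<in> Field \<alpha>" "b \<in> Field \<alpha>" using xy unfolding FW x y by auto
    show "(x,y) \<in> ?W \<or> (y,x) \<in> ?W"
    proof (cases "a = b")
      case True then show ?thesis unfolding x y omega_times_def using ab by auto
    next
      case False then show ?thesis unfolding x y omega_times_def using ab f(4)[OF ab False] by auto
    qed
  qed
  have "?W - Id \<subseteq> (\<alpha> - Id) <*lex*> less_than"
    unfolding omega_times_def lex_prod_def by auto
  then have wf: "wf (?W - Id)"
    by (rule wf_subset[rotated]) (use f(5) in auto)
  show ?thesis
    unfolding well_order_on_def linear_order_on_def partial_order_on_def preorder_on_def
    using refl trans antisym total wf by (auto intro: FieldI1 FieldI2)
qed

lemma underS_omega_times_empty:
  assumes "Well_order \<alpha>" "p \<in> Field \<alpha>"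
  shows "underS (omega_times \<alpha>) (p,m) = {} \<longleftrightarrow> m = 0 \<and> underS \<alpha> p = {}"
proof
  assume h: "underS (omega_times \<alpha>) (p,m) = {}"
  have "m = 0"
  proof (rule ccontr)
    assume "m \<noteq> 0"
    then have "(p,0) \<in> underS (omega_times \<alpha>) (p,m)"
      using assms unfolding underS_def omega_times_def by auto
    then show False using h by auto
  qed
  moreover have "underS \<alpha> p = {}"
  proof (rule ccontr)
    assume "underS \<alpha> p \<noteq> {}"
    then obtain q where q: "q \<noteq> p" "(q,p) \<in> \<alpha>" unfolding underS_def by auto
    then have "q \<in> Field \<alpha>" by (auto simp: Field_def)
    then have "(q,0) \<in> underS (omega_times \<alpha>) (p,m)"
      using q assms unfolding underS_def omega_times_def by auto
    then show False using h by auto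
  qed
  ultimately show "m = 0 \<and> underS \<alpha> p = {}" by simp
next
  assume "m = 0 \<and> underS \<alpha> p = {}"
  then show "underS (omega_times \<alpha>) (p,m) = {}"
    unfolding underS_def omega_times_def by auto
qed

lemma Restr_underS_strict:
  assumes W: "Well_order r" and ab: "(a,b) \<in> r" "a \<noteq> b"
  shows "(Restr r (underS r a), Restr r (underS r b)) \<in> ordLess"
proof -
  note f = WO_facts[OF W]
  have o1: "wo_rel.ofilter r (underS r a)" "wo_rel.ofilter r (underS r b)"
    using W by (simp_all add: wo_rel_def wo_rel.underS_ofilter)
  have "underS r a \<subseteq> underS r b"
    unfolding underS_def using ab f(2,3) by blast
  moreover have "a \<in> underS r b" "a \<notin> underS r a" using ab unfolding underS_def by auto
  ultimately have "underS r a < underS r b" by blast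
  then show ?thesis using ofilter_subset_ordLess[OF W o1] by blast
qed

lemma ordIso_Field_empty:
  assumes "(r, r') \<in> ordIso" shows "Field r = {} \<longleftrightarrow> Field r' = {}"
proof -
  obtain f where "iso r r' f" using assms unfolding ordIso_def by blast
  then have "f ` Field r = Field r'" unfolding iso_def bij_betw_def by blast
  then show ?thesis by auto
qed

lemma empty_ordLess:
  fixes r :: "'b rel"
  assumes "Well_order r" "Field r \<noteq> {}"
  shows "({} :: 'b rel, r) \<in> ordLess"
proof -
  have "wo_rel.ofilter r {}" unfolding Order_Relation.ofilter_def by simp
  then have "(Restr r {}, r) \<in> ordLess" using ofilter_ordLess[OF assms(1)] assms(2) by blast
  then show ?thesis by simp
qed




fun aseq :: "(nat \<Rightarrow> nat) \<Rightarrow> nat \<Rightarrow> nat" where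
  "aseq M 0 = 0"
| "aseq M (Suc l) = max (Suc (aseq M l)) (M l)"

lemma aseq_smono: "strict_mono (aseq M)"
  by (rule strict_monoI_Suc) simp

lemma aseq_less: "i < j \<Longrightarrow> aseq M i < aseq M j"
  using aseq_smono strict_mono_less by blast

lemma aseq_le: "i \<le> j \<Longrightarrow> aseq M i \<le> aseq M j"
  using aseq_smono strict_mono_less_eq by blast

lemma aseq_ge: "l \<le> aseq M l"
  by (induction l) auto

lemma aseq_M: "M l \<le> aseq M (Suc l)" by simp

declare aseq.simps(2)[simp del]

definition blk :: "(nat \<Rightarrow> nat) \<Rightarrow> nat \<Rightarrow> nat" where
  "blk M t = (LEAST j. t < aseq M (Suc j))"

lemma blk_props: "aseq M (blk M t) \<le> t \<and> t < aseq M (Suc (blk M t))"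
proof
  have ex: "t < aseq M (Suc t)" using aseq_ge[of "Suc t" M] by simp
  show "t < aseq M (Suc (blk M t))" unfolding blk_def by (rule LeastI[of _ t]) (rule ex)
  show "aseq M (blk M t) \<le> t"
  proof (cases "blk M t")
    case 0 then show ?thesis by simp
  next
    case (Suc j)
    then have "j < blk M t" by simp
    then have "\<not> t < aseq M (Suc j)" unfolding blk_def by (rule not_less_Least)
    then show ?thesis using Suc by simp
  qed
qed

lemma blk_eq:
  assumes "aseq M j \<le> t" "t < aseq M (Suc j)" shows "blk M t = j"
proof (rule ccontr)
  assume ne: "blk M t \<noteq> j"
  note b = blk_props[of M t]
  show False
  proof (cases "blk M t < j")
    case True
    then have "aseq M (Suc (blk M t)) \<le> aseq M j" by (intro aseq_le) simp
    then show False using b assms by simp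
  next
    case False
    then have "Suc j \<le> blk M t" using ne by simp
    then have "aseq M (Suc j) \<le> aseq M (blk M t)" by (rule aseq_le)
    then show False using b assms by simp
  qed
qed

lemma blk_lt:
  assumes "t < aseq M L" shows "blk M t < L"
proof (rule ccontr)
  assume "\<not> blk M t < L"
  then have "aseq M L \<le> aseq M (blk M t)" by (intro aseq_le) simp
  then show False using blk_props[of M t] assms by simp
qed

lemma blocks_sum:
  fixes h :: "nat \<Rightarrow> 'b::comm_monoid_add"
  shows "(\<Sum>j<L. \<Sum>t\<in>{aseq M j..<aseq M (Suc j)}. h t) = (\<Sum>t<aseq M L. h t)"
proof (induction L)
  case 0 then show ?case by simp
next
  case (Suc L)
  have "(\<Sum>t<aseq M L. h t) + (\<Sum>t\<in>{aseq M L..<aseq M (Suc L)}. h t) = (\<Sum>t<aseq M (Suc L). h t)"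
    using sum.atLeastLessThan_concat[of 0 "aseq M L" "aseq M (Suc L)" h] aseq_le[of L "Suc L" M]
    by (simp add: atLeast0LessThan)
  then show ?case using Suc by simp
qed

lemma legal_I_take: "legal_I \<gamma> ms \<Longrightarrow> legal_I \<gamma> (take n ms)"
  unfolding legal_I_def by auto

lemma legal_I_below:
  assumes "legal_I \<gamma> ms" "l < length ms"
  shows "(snd (ms ! l), \<gamma>) \<in> ordLess"
  using assms(2)
proof (induction l)
  case 0 then show ?case using assms(1) unfolding legal_I_def by auto
next
  case (Suc l)
  then have "(snd (ms ! Suc l), snd (ms ! l)) \<in> ordLess" using assms(1) unfolding legal_I_def
    by (metis Suc_neq_Zero diff_Suc_1)
  then show ?case using Suc ordLess_transitive by auto
qed




locale simset =
  fixes e :: "nat \<Rightarrow> 'a::real_normed_vector" and F :: "real set" and X :: "'a set"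
    and \<alpha> :: "'o rel" and \<sigma> :: "('o \<times> nat, 'a) strategyII"
    and y z :: "nat \<Rightarrow> 'a" and cc :: "nat \<Rightarrow> nat \<Rightarrow> real" and MM :: "nat \<Rightarrow> nat" and K :: real
  assumes subF: "subfield_real F"
    and Xspan: "\<exists>S. X = spanF F S"
    and WO: "Well_order \<alpha>"
    and \<sigma>S: "strategy_II e F X (omega_times \<alpha>) \<sigma>"
    and \<sigma>W: "\<forall>ms. complete_I (omega_times \<alpha>) ms \<longrightarrow> equivK K (outcome \<sigma> ms) (map y [0..<length ms])"
    and ccF: "\<forall>l j. cc l j \<in> F"
    and ccz: "\<forall>l j. MM l \<le> j \<longrightarrow> cc l j = 0"
    and rep: "\<forall>l. z l = (\<Sum>j<MM l. cc l j *\<^sub>R y j)"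
    and znz: "\<forall>l. z l \<noteq> 0"
    and Kpos: "K > 0"
begin

abbreviation "W \<equiv> omega_times \<alpha>"
abbreviation "A \<equiv> aseq MM"
abbreviation "bk \<equiv> blk MM"

definition pt :: "'o rel \<Rightarrow> 'o" where
  "pt \<xi> = (SOME p. p \<in> Field \<alpha> \<and> (\<xi>, Restr \<alpha> (underS \<alpha> p)) \<in> ordIso)"

definition rho :: "'o \<Rightarrow> nat \<Rightarrow> ('o \<times> nat) rel" where
  "rho p m = Restr W (underS W (p, m))"

definition sim :: "(int \<times> 'o rel) list \<Rightarrow> (int \<times> ('o \<times> nat) rel) list" where
  "sim ms = map (\<lambda>t. (fst (ms ! bk t), rho (pt (snd (ms ! bk t))) (A (Suc (bk t)) - Suc t)))
                [0..<A (length ms)]"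

definition Bas :: "'a set \<Rightarrow> 'a set" where
  "Bas U = (SOME B. finite B \<and> U = spanF F B)"

definition FF where "FF ms t = fst (\<sigma> (take (Suc t) (sim ms)))"
definition XX where "XX ms t = snd (\<sigma> (take (Suc t) (sim ms)))"

definition \<tau> :: "('o, 'a) strategyII" where
  "\<tau> ms = (spanF F (\<Union>t\<in>{A (length ms - 1)..<A (length ms)}. Bas (FF ms t)),
           \<Sum>i<A (length ms). cc (length ms - 1) i *\<^sub>R XX ms i)"

lemma WW: "Well_order W" using Well_order_omega_times[OF WO] .

lemma Bas: "fd_subspace F U \<Longrightarrow> finite (Bas U) \<and> U = spanF F (Bas U)"
  unfolding Bas_def fd_subspace_def by (rule someI_ex)

lemma length_sim[simp]: "length (sim ms) = A (length ms)"
  unfolding sim_def by simp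

lemma sim_nth: "t < A (length ms) \<Longrightarrow>
   sim ms ! t = (fst (ms ! bk t), rho (pt (snd (ms ! bk t))) (A (Suc (bk t)) - Suc t))"
  unfolding sim_def by simp

lemma sim_take:
  assumes "j < length ms"
  shows "sim (take (Suc j) ms) = take (A (Suc j)) (sim ms)"
proof (rule nth_equalityI)
  have "A (Suc j) \<le> A (length ms)" using assms by (intro aseq_le) simp
  moreover have "length (take (Suc j) ms) = Suc j" using assms by simp
  ultimately show "length (sim (take (Suc j) ms)) = length (take (A (Suc j)) (sim ms))"
    by (simp only: length_sim length_take min_absorb1)
  fix t assume "t < length (sim (take (Suc j) ms))"
  then have t: "t < A (Suc j)" using assms by (simp add: min_absorb1)
  have "bk t < Suc j" using t by (rule blk_lt)
  then have "take (Suc j) ms ! bk t = ms ! bk t" by simp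
  moreover have "t < A (length ms)" using t \<open>A (Suc j) \<le> A (length ms)\<close> by simp
  ultimately show "sim (take (Suc j) ms) ! t = take (A (Suc j)) (sim ms) ! t"
    using t assms by (simp add: sim_nth min_def)
qed

lemma sim_take2:
  assumes "j < length ms" "t < A (Suc j)"
  shows "take (Suc t) (sim (take (Suc j) ms)) = take (Suc t) (sim ms)"
  using assms by (simp add: sim_take min_def)

lemma FF_take: "j < length ms \<Longrightarrow> t < A (Suc j) \<Longrightarrow> FF (take (Suc j) ms) t = FF ms t"
  unfolding FF_def by (simp add: sim_take2)

lemma XX_take: "j < length ms \<Longrightarrow> t < A (Suc j) \<Longrightarrow> XX (take (Suc j) ms) t = XX ms t"
  unfolding XX_def by (simp add: sim_take2)

lemma pt:
  assumes "(\<xi>, \<alpha>) \<in> ordLess"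
  shows "pt \<xi> \<in> Field \<alpha> \<and> (\<xi>, Restr \<alpha> (underS \<alpha> (pt \<xi>))) \<in> ordIso"
proof -
  have "Well_order \<xi>" using assms unfolding ordLess_def by auto
  then have "\<exists>p. p \<in> Field \<alpha> \<and> (\<xi>, Restr \<alpha> (underS \<alpha> p)) \<in> ordIso"
    using ordLess_iff_ordIso_Restr[OF WO, of \<xi>] assms by blast
  then show ?thesis unfolding pt_def by (rule someI_ex)
qed

lemma pt_zero:
  assumes "(\<xi>, \<alpha>) \<in> ordLess"
  shows "ord_zero \<xi> \<longleftrightarrow> underS \<alpha> (pt \<xi>) = {}"
proof -
  have "wo_rel.ofilter \<alpha> (underS \<alpha> (pt \<xi>))"
    using WO by (simp add: wo_rel_def wo_rel.underS_ofilter)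
  then have "Field (Restr \<alpha> (underS \<alpha> (pt \<xi>))) = underS \<alpha> (pt \<xi>)"
    using Field_Restr_ofilter[OF WO] by blast
  then show ?thesis using ordIso_Field_empty[OF conjunct2[OF pt[OF assms]]]
    unfolding ord_zero_def by simp
qed

lemma pt_less:
  assumes "(\<xi>', \<xi>) \<in> ordLess" "(\<xi>, \<alpha>) \<in> ordLess"
  shows "(pt \<xi>', pt \<xi>) \<in> \<alpha> \<and> pt \<xi>' \<noteq> pt \<xi>"
proof -
  have a': "(\<xi>', \<alpha>) \<in> ordLess" using assms ordLess_transitive by blast
  let ?p = "pt \<xi>" and ?q = "pt \<xi>'"
  have p: "?p \<in> Field \<alpha>" "(\<xi>, Restr \<alpha> (underS \<alpha> ?p)) \<in> ordIso" using pt[OF assms(2)] by auto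
  have q: "?q \<in> Field \<alpha>" "(\<xi>', Restr \<alpha> (underS \<alpha> ?q)) \<in> ordIso" using pt[OF a'] by auto
  have "(Restr \<alpha> (underS \<alpha> ?q), \<xi>) \<in> ordLess"
    using ordIso_ordLess_trans[OF ordIso_symmetric[OF q(2)] assms(1)] .
  then have "(Restr \<alpha> (underS \<alpha> ?q), Restr \<alpha> (underS \<alpha> ?p)) \<in> ordLess"
    using ordLess_ordIso_trans p(2) by blast
  moreover have o1: "wo_rel.ofilter \<alpha> (underS \<alpha> ?q)" "wo_rel.ofilter \<alpha> (underS \<alpha> ?p)"
    using WO by (simp_all add: wo_rel_def wo_rel.underS_ofilter)
  ultimately have sub: "underS \<alpha> ?q < underS \<alpha> ?p"
    using ofilter_subset_ordLess[OF WO o1] by blast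
  show ?thesis
  proof (rule ccontr)
    assume "\<not> ?thesis"
    then have "?q = ?p \<or> (?p, ?q) \<in> \<alpha> \<and> ?p \<noteq> ?q"
      using WO_facts(4)[OF WO p(1) q(1)] by (cases "?q = ?p") auto
    then show False
    proof
      assume "?q = ?p" then show False using sub by simp
    next
      assume "(?p, ?q) \<in> \<alpha> \<and> ?p \<noteq> ?q"
      then have "?p \<in> underS \<alpha> ?q" unfolding underS_def by auto
      then have "?p \<in> underS \<alpha> ?p" using sub by blast
      then show False by (simp add: underS_notIn)
    qed
  qed
qed

lemma rho_zero:
  assumes "p \<in> Field \<alpha>"
  shows "ord_zero (rho p m) \<longleftrightarrow> m = 0 \<and> underS \<alpha> p = {}"
proof -
  have "wo_rel.ofilter W (underS W (p, m))"
    using WW by (simp add: wo_rel_def wo_rel.underS_ofilter)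
  then have "Field (rho p m) = underS W (p, m)"
    unfolding rho_def using Field_Restr_ofilter[OF WW] by blast
  then show ?thesis unfolding ord_zero_def using underS_omega_times_empty[OF WO assms] by simp
qed

lemma rho_WO: "Well_order (rho p m)"
  unfolding rho_def using Well_order_Restr[OF WW] .

lemma rho_less_W:
  assumes "p \<in> Field \<alpha>" shows "(rho p m, W) \<in> ordLess"
proof -
  have "(p, m) \<in> Field W" using Field_omega_times[OF WO] assms by auto
  then have "Field W \<noteq> {}" by auto
  then show ?thesis unfolding rho_def using underS_Restr_ordLess[OF WW] by blast
qed

lemma rho_less:
  assumes "p \<in> Field \<alpha>" "p' \<in> Field \<alpha>" "((p,m),(p',m')) \<in> W" "(p,m) \<noteq> (p',m')"
  shows "(rho p m, rho p' m') \<in> ordLess"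
  unfolding rho_def using Restr_underS_strict[OF WW assms(3,4)] .

end



context simset begin

lemma sim_nth':
  assumes "t < A (length ms)"
  shows "fst (sim ms ! t) = fst (ms ! bk t)"
    "snd (sim ms ! t) = rho (pt (snd (ms ! bk t))) (A (Suc (bk t)) - Suc t)"
  using sim_nth[OF assms] by simp_all

lemma legal_pt:
  assumes "legal_I \<alpha> ms" "j < length ms"
  shows "pt (snd (ms ! j)) \<in> Field \<alpha>"
  using pt[OF legal_I_below[OF assms]] by simp

lemma sim_legal:
  assumes L: "legal_I \<alpha> ms"
  shows "legal_I W (sim ms)"
proof -
  let ?L = "length ms"
  have part1: "Well_order (snd (sim ms ! t)) \<and>
     (if t = 0 then (snd (sim ms ! 0), W) \<in> ordLess
      else (snd (sim ms ! t), snd (sim ms ! (t - 1))) \<in> ordLess)" if t: "t < A ?L" for t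
  proof -
    define j where "j = bk t"
    have j: "j < ?L" unfolding j_def using t by (rule blk_lt)
    have bj: "A j \<le> t" "t < A (Suc j)" using blk_props[of MM t] unfolding j_def by auto
    have pj: "pt (snd (ms ! j)) \<in> Field \<alpha>" by (rule legal_pt[OF L j])
    have st: "snd (sim ms ! t) = rho (pt (snd (ms ! j))) (A (Suc j) - Suc t)"
      using sim_nth'(2)[OF t] unfolding j_def .
    have "(snd (sim ms ! t), snd (sim ms ! (t - 1))) \<in> ordLess" if t0: "t \<noteq> 0"
    proof -
      define j' where "j' = bk (t - 1)"
      have t1: "t - 1 < A ?L" using t by simp
      have st': "snd (sim ms ! (t-1)) = rho (pt (snd (ms ! j'))) (A (Suc j') - Suc (t - 1))"
        using sim_nth'(2)[OF t1] unfolding j'_def .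
      show ?thesis
      proof (cases "A j \<le> t - 1")
        case True
        then have "j' = j" unfolding j'_def using bj by (intro blk_eq) auto
        then have m: "A (Suc j') - Suc (t - 1) = Suc (A (Suc j) - Suc t)" using bj t0 by simp
        have st'': "snd (sim ms ! (t-1)) = rho (pt (snd (ms ! j))) (Suc (A (Suc j) - Suc t))"
        proof -
          have m2: "A (Suc j) - t = Suc (A (Suc j) - Suc t)" using bj by simp
          have "A (Suc j) - Suc (t - 1) = A (Suc j) - t" using t0 by simp
          then show ?thesis using st' \<open>j' = j\<close> m2 by simp
        qed
        show ?thesis unfolding st st''
          by (rule rho_less[OF pj pj]) (use pj in \<open>auto simp: omega_times_def\<close>)
      next
        case False
        then have tj: "t = A j" using bj by simp
        then obtain i where i: "j = Suc i" using t0 by (cases j) auto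
        have "A i < A (Suc i)" by (rule aseq_less) simp
        then have "j' = i" unfolding j'_def using tj i by (intro blk_eq) auto
        have ij: "i < ?L" using i j by simp
        have "(snd (ms ! j), snd (ms ! i)) \<in> ordLess"
          using L j i unfolding legal_I_def by (metis Suc_neq_Zero diff_Suc_1)
        then have pl: "(pt (snd (ms ! j)), pt (snd (ms ! i))) \<in> \<alpha> \<and> pt (snd (ms ! j)) \<noteq> pt (snd (ms ! i))"
          using pt_less legal_I_below[OF L ij] by blast
        show ?thesis unfolding st st' \<open>j' = i\<close>
          by (rule rho_less[OF pj legal_pt[OF L ij]]) (use pl pj legal_pt[OF L ij] in \<open>auto simp: omega_times_def\<close>)
      qed
    qed
    moreover have "(snd (sim ms ! 0), W) \<in> ordLess" if "t = 0"
      using that st rho_less_W[OF pj] by simp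
    ultimately show ?thesis using st rho_WO by auto
  qed
  have part2: "\<not> ord_zero (snd (sim ms ! t))" if t: "t + 1 < A ?L" for t
  proof
    assume z: "ord_zero (snd (sim ms ! t))"
    define j where "j = bk t"
    have t': "t < A ?L" using t by simp
    have j: "j < ?L" unfolding j_def using t' by (rule blk_lt)
    have bj: "A j \<le> t" "t < A (Suc j)" using blk_props[of MM t] unfolding j_def by auto
    have pj: "pt (snd (ms ! j)) \<in> Field \<alpha>" by (rule legal_pt[OF L j])
    have st: "snd (sim ms ! t) = rho (pt (snd (ms ! j))) (A (Suc j) - Suc t)"
      using sim_nth'(2)[OF t'] unfolding j_def .
    have zz: "A (Suc j) - Suc t = 0" "underS \<alpha> (pt (snd (ms ! j))) = {}"
      using z unfolding st rho_zero[OF pj] by auto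
    have "Suc j \<noteq> ?L" using zz(1) bj t by auto
    then have "j + 1 < ?L" using j by simp
    then have "\<not> ord_zero (snd (ms ! j))" using L unfolding legal_I_def by blast
    then show False using zz(2) pt_zero[OF legal_I_below[OF L j]] by simp
  qed
  have p1: "\<forall>l<length (sim ms). Well_order (snd (sim ms ! l)) \<and>
     (if l = 0 then (snd (sim ms ! 0), W) \<in> ordLess
      else (snd (sim ms ! l), snd (sim ms ! (l - 1))) \<in> ordLess)"
  proof (intro allI impI)
    fix l assume "l < length (sim ms)"
    then have "l < A ?L" by simp
    then show "Well_order (snd (sim ms ! l)) \<and>
     (if l = 0 then (snd (sim ms ! 0), W) \<in> ordLess
      else (snd (sim ms ! l), snd (sim ms ! (l - 1))) \<in> ordLess)" by (rule part1)
  qed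
  have p2: "\<forall>l. l + 1 < length (sim ms) \<longrightarrow> \<not> ord_zero (snd (sim ms ! l))"
    using part2 by simp
  show ?thesis unfolding legal_I_def using p1 p2 by blast
qed

lemma sim_nonempty: assumes "ms \<noteq> []" shows "sim ms \<noteq> []"
proof -
  have "0 < length ms" using assms by simp
  then have "0 < A (length ms)" using aseq_ge[of "length ms" MM] by linarith
  then show ?thesis by (simp add: sim_def)
qed

lemma sim_complete:
  assumes C: "complete_I \<alpha> ms" and ne: "ms \<noteq> []"
  shows "complete_I W (sim ms)"
proof -
  have L: "legal_I \<alpha> ms" using C unfolding complete_I_def by simp
  let ?L = "length ms"
  define t where "t = A ?L - 1"
  have Lpos: "?L = Suc (?L - 1)" using ne by simp
  have AL: "A (?L - 1) < A ?L" by (rule aseq_less) (use ne in simp)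
  have t: "t < A ?L" unfolding t_def using AL by simp
  have bt: "bk t = ?L - 1" unfolding t_def by (rule blk_eq) (use AL Lpos in \<open>simp_all\<close>)
  have j: "?L - 1 < ?L" using ne by simp
  have pj: "pt (snd (ms ! (?L - 1))) \<in> Field \<alpha>" by (rule legal_pt[OF L j])
  have st: "snd (sim ms ! t) = rho (pt (snd (ms ! (?L - 1)))) 0"
    using sim_nth'(2)[OF t] unfolding bt using Lpos t_def AL by (metis diff_Suc_1 diff_self_eq_0 Suc_diff_1 gr_implies_not0 not_gr0)
  have "ord_zero (snd (last ms))" using C ne unfolding complete_I_def by simp
  then have "ord_zero (snd (ms ! (?L - 1)))" using ne by (simp add: last_conv_nth)
  then have "underS \<alpha> (pt (snd (ms ! (?L - 1)))) = {}"
    using pt_zero[OF legal_I_below[OF L j]] by simp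
  then have "ord_zero (snd (sim ms ! t))" unfolding st rho_zero[OF pj] by simp
  moreover have "last (sim ms) = sim ms ! t"
    using sim_nonempty[OF ne] unfolding t_def by (simp add: last_conv_nth)
  ultimately show ?thesis unfolding complete_I_def using sim_legal[OF L] sim_nonempty[OF ne] by simp
qed

lemma LS:
  assumes L: "legal_I \<alpha> ms" and t: "t < A (length ms)"
  shows "fd_subspace F (FF ms t) \<and> FF ms t \<subseteq> X \<inter> tail_space e F (fst (ms ! bk t)) \<and> XX ms t \<noteq> 0 \<and>
     (\<exists>f. (\<forall>j\<le>t. f j \<in> FF ms j) \<and> XX ms t = (\<Sum>j\<le>t. f j))"
proof -
  let ?P = "take (Suc t) (sim ms)"
  have lP: "length ?P = Suc t" using t by simp
  have "legal_I W ?P" using legal_I_take[OF sim_legal[OF L]] .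
  moreover have "?P \<noteq> []" by (metis lP length_0_conv nat.distinct(1))
  ultimately have la: "legal_II_answer e F X \<sigma> ?P" using \<sigma>S unfolding strategy_II_def by blast
  have tk: "take (Suc j) ?P = take (Suc j) (sim ms)" if "j \<le> t" for j using that by (simp add: min_def)
  have FFj: "fst (\<sigma> (take (Suc j) ?P)) = FF ms j" if "j \<le> t" for j
    unfolding FF_def tk[OF that] ..
  have Pt: "fst (?P ! t) = fst (ms ! bk t)" using sim_nth'(1)[OF t] by simp
  have XXt: "snd (\<sigma> ?P) = XX ms t" unfolding XX_def ..
  have tP: "take (Suc t) ?P = ?P" by simp
  have "fd_subspace F (fst (\<sigma> (take (Suc t) ?P))) \<and> fst (\<sigma> (take (Suc t) ?P)) \<subseteq> X \<inter> tail_space e F (fst (?P ! t)) \<and>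
        snd (\<sigma> ?P) \<noteq> 0 \<and> (\<exists>f. (\<forall>j\<le>t. f j \<in> fst (\<sigma> (take (Suc j) ?P))) \<and> snd (\<sigma> ?P) = (\<Sum>j\<le>t. f j))"
    using la unfolding legal_II_answer_def Let_def lP by simp
  then show ?thesis unfolding FFj[OF order_refl] Pt XXt using FFj by auto
qed

end



lemma double_sum_scale:
  fixes w :: "nat \<Rightarrow> 'a::real_vector"
  shows "(\<Sum>l<L. b l *\<^sub>R (\<Sum>i<N. c l i *\<^sub>R w i)) = (\<Sum>i<N. (\<Sum>l<L. b l * c l i) *\<^sub>R w i)"
proof -
  have "(\<Sum>l<L. b l *\<^sub>R (\<Sum>i<N. c l i *\<^sub>R w i)) = (\<Sum>l<L. \<Sum>i<N. (b l * c l i) *\<^sub>R w i)"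
    by (simp add: scaleR_sum_right)
  also have "\<dots> = (\<Sum>i<N. \<Sum>l<L. (b l * c l i) *\<^sub>R w i)" by (rule sum.swap)
  also have "\<dots> = (\<Sum>i<N. (\<Sum>l<L. b l * c l i) *\<^sub>R w i)" by (simp add: scaleR_sum_left)
  finally show ?thesis .
qed

context simset begin

lemma ccsum:
  fixes w :: "nat \<Rightarrow> 'b::real_vector"
  assumes "MM l \<le> N"
  shows "(\<Sum>i<N. cc l i *\<^sub>R w i) = (\<Sum>i<MM l. cc l i *\<^sub>R w i)"
  by (rule sum.mono_neutral_right) (use assms ccz in auto)

lemma tau_snd:
  assumes "l < length ms"
  shows "snd (\<tau> (take (Suc l) ms)) = (\<Sum>i<A (Suc l). cc l i *\<^sub>R XX ms i)"
proof -
  have len: "length (take (Suc l) ms) = Suc l" using assms by simp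
  show ?thesis unfolding \<tau>_def len using XX_take[OF assms] by simp
qed

lemma tau_fst:
  assumes "l < length ms"
  shows "fst (\<tau> (take (Suc l) ms)) = spanF F (\<Union>t\<in>{A l..<A (Suc l)}. Bas (FF ms t))"
proof -
  have len: "length (take (Suc l) ms) = Suc l" using assms by simp
  have "(\<Union>t\<in>{A l..<A (Suc l)}. Bas (FF (take (Suc l) ms) t)) = (\<Union>t\<in>{A l..<A (Suc l)}. Bas (FF ms t))"
    using FF_take[OF assms] by auto
  then show ?thesis unfolding \<tau>_def len by simp
qed

lemma main_equiv:
  assumes C: "complete_I \<alpha> ms"
  shows "equivK K (outcome \<tau> ms) (map z [0..<length ms])"
proof (cases "ms = []")
  case True
  then show ?thesis unfolding equivK_def outcome_def by simp
next
  case ne: False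
  let ?L = "length ms" and ?N = "A (length ms)"
  let ?xs = "outcome \<sigma> (sim ms)"
  have E: "equivK K ?xs (map y [0..<?N])"
    using \<sigma>W[rule_format, OF sim_complete[OF C ne]] by simp
  have lxs: "length ?xs = ?N" unfolding outcome_def by simp
  have xsi: "?xs ! i = XX ms i" if "i < ?N" for i
    using that unfolding outcome_def XX_def by simp
  have v: "outcome \<tau> ms ! l = (\<Sum>i<?N. cc l i *\<^sub>R (?xs ! i))" if l: "l < ?L" for l
  proof -
    have m1: "MM l \<le> A (Suc l)" by (rule aseq_M)
    have m2: "A (Suc l) \<le> ?N" using l by (intro aseq_le) simp
    have "outcome \<tau> ms ! l = snd (\<tau> (take (Suc l) ms))" unfolding outcome_def using l by simp
    also have "\<dots> = (\<Sum>i<A (Suc l). cc l i *\<^sub>R XX ms i)" by (rule tau_snd[OF l])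
    also have "\<dots> = (\<Sum>i<MM l. cc l i *\<^sub>R XX ms i)" by (rule ccsum[OF m1])
    also have "\<dots> = (\<Sum>i<?N. cc l i *\<^sub>R XX ms i)" by (rule ccsum[symmetric]) (use m1 m2 in simp)
    also have "\<dots> = (\<Sum>i<?N. cc l i *\<^sub>R (?xs ! i))" using xsi by simp
    finally show ?thesis .
  qed
  have zl: "z l = (\<Sum>i<?N. cc l i *\<^sub>R y i)" if l: "l < ?L" for l
  proof -
    have m1: "MM l \<le> A (Suc l)" by (rule aseq_M)
    have m2: "A (Suc l) \<le> ?N" using l by (intro aseq_le) simp
    have "z l = (\<Sum>i<MM l. cc l i *\<^sub>R y i)" using rep by simp
    also have "\<dots> = (\<Sum>i<?N. cc l i *\<^sub>R y i)" by (rule ccsum[symmetric]) (use m1 m2 in simp)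
    finally show ?thesis .
  qed
  show ?thesis unfolding equivK_def
  proof (intro conjI allI)
    show "length (outcome \<tau> ms) = length (map z [0..<length ms])" unfolding outcome_def by simp
  next
    fix b :: "nat \<Rightarrow> real"
    define d where "d i = (\<Sum>l<?L. b l * cc l i)" for i
    have s1: "(\<Sum>i<length (outcome \<tau> ms). b i *\<^sub>R outcome \<tau> ms ! i) = (\<Sum>i<length ?xs. d i *\<^sub>R ?xs ! i)"
    proof -
      have lo: "length (outcome \<tau> ms) = ?L" by (simp add: outcome_def)
      have "(\<Sum>i<length (outcome \<tau> ms). b i *\<^sub>R outcome \<tau> ms ! i) = (\<Sum>l<?L. b l *\<^sub>R (\<Sum>i<?N. cc l i *\<^sub>R (?xs ! i)))"
        unfolding lo by (rule sum.cong) (simp_all add: v)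
      also have "\<dots> = (\<Sum>i<?N. d i *\<^sub>R ?xs ! i)" unfolding d_def by (rule double_sum_scale)
      finally show ?thesis using lxs by simp
    qed
    have s2: "(\<Sum>i<length (map z [0..<?L]). b i *\<^sub>R map z [0..<?L] ! i) = (\<Sum>i<length (map y [0..<?N]). d i *\<^sub>R map y [0..<?N] ! i)"
    proof -
      have "(\<Sum>i<length (map z [0..<?L]). b i *\<^sub>R map z [0..<?L] ! i) = (\<Sum>l<?L. b l *\<^sub>R (\<Sum>i<?N. cc l i *\<^sub>R y i))"
        by (rule sum.cong) (simp_all add: zl)
      also have "\<dots> = (\<Sum>i<?N. d i *\<^sub>R y i)" unfolding d_def by (rule double_sum_scale)
      also have "\<dots> = (\<Sum>i<length (map y [0..<?N]). d i *\<^sub>R map y [0..<?N] ! i)" by simp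
      finally show ?thesis .
    qed
    show "1 / K * norm (\<Sum>i<length (outcome \<tau> ms). b i *\<^sub>R outcome \<tau> ms ! i)
        \<le> norm (\<Sum>i<length (map z [0..<length ms]). b i *\<^sub>R map z [0..<length ms] ! i)"
      unfolding s1 s2 using E unfolding equivK_def by blast
    show "norm (\<Sum>i<length (map z [0..<length ms]). b i *\<^sub>R map z [0..<length ms] ! i)
        \<le> K * norm (\<Sum>i<length (outcome \<tau> ms). b i *\<^sub>R outcome \<tau> ms ! i)"
      unfolding s1 s2 using E unfolding equivK_def by blast
  qed
qed

lemma completion:
  assumes L: "legal_I \<alpha> ms" and ne: "ms \<noteq> []"
  shows "\<exists>ms'. complete_I \<alpha> ms' \<and> take (length ms) ms' = ms"
proof (cases "ord_zero (snd (last ms))")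
  case True
  then show ?thesis using L ne unfolding complete_I_def by (intro exI[of _ ms]) simp
next
  case False
  let ?L = "length ms"
  define ms' where "ms' = ms @ [(0::int, {})]"
  have last_nth: "snd (last ms) = snd (ms ! (?L - 1))" using ne by (simp add: last_conv_nth)
  have wl: "Well_order (snd (ms ! (?L - 1)))" using L ne unfolding legal_I_def by simp
  have el: "({} :: 'o rel, snd (ms ! (?L - 1))) \<in> ordLess"
    by (rule empty_ordLess[OF wl]) (use False last_nth in \<open>simp add: ord_zero_def\<close>)
  then have we: "Well_order ({} :: 'o rel)" unfolding ordLess_def by simp
  have "legal_I \<alpha> ms'"
    unfolding legal_I_def
  proof (rule conjI; intro allI impI)
    fix l assume l: "l < length ms'"
    show "Well_order (snd (ms' ! l)) \<and>
          (if l = 0 then (snd (ms' ! 0), \<alpha>) \<in> ordLess else (snd (ms' ! l), snd (ms' ! (l - 1))) \<in> ordLess)"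
    proof (cases "l < ?L")
      case True
      have e1: "ms' ! l = ms ! l" "ms' ! (l - 1) = ms ! (l - 1)" "ms' ! 0 = ms ! 0"
        using True unfolding ms'_def by (auto simp: nth_append)
      have "Well_order (snd (ms ! l)) \<and>
          (if l = 0 then (snd (ms ! 0), \<alpha>) \<in> ordLess else (snd (ms ! l), snd (ms ! (l - 1))) \<in> ordLess)"
        using L True unfolding legal_I_def by blast
      then show ?thesis unfolding e1 .
    next
      case False
      then have "l = ?L" using l unfolding ms'_def by simp
      then show ?thesis using ne we el unfolding ms'_def by (simp add: nth_append)
    qed
  next
    fix l assume l: "l + 1 < length ms'"
    show "\<not> ord_zero (snd (ms' ! l))"
    proof (cases "l + 1 < ?L")
      case True
      then show ?thesis using L unfolding legal_I_def ms'_def by (simp add: nth_append)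
    next
      case False
      then have "l = ?L - 1" "l < ?L" using l unfolding ms'_def by auto
      then show ?thesis using \<open>\<not> ord_zero (snd (last ms))\<close> last_nth unfolding ms'_def by (simp add: nth_append)
    qed
  qed
  moreover have "ord_zero (snd (last ms'))" unfolding ms'_def ord_zero_def by simp
  ultimately have "complete_I \<alpha> ms'" unfolding complete_I_def ms'_def by simp
  then show ?thesis unfolding ms'_def by (intro exI[of _ "ms @ [(0::int, {})]"]) simp
qed

end



lemma sum_indicator_scale:
  fixes w :: "nat \<Rightarrow> 'b::real_vector"
  assumes "l < n"
  shows "(\<Sum>i<n. (if i = l then 1 else 0) *\<^sub>R w i) = w l"
proof -
  have "(\<Sum>i<n. (if i = l then 1 else 0) *\<^sub>R w i) = (\<Sum>i<n. if i = l then w l else 0)"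
    by (rule sum.cong) auto
  also have "\<dots> = w l" using assms by simp
  finally show ?thesis .
qed

context simset begin

lemma tau_strategy: "strategy_II e F X \<alpha> \<tau>"
  unfolding strategy_II_def
proof (intro allI impI)
  fix ms assume h: "ms \<noteq> [] \<and> legal_I \<alpha> ms"
  then have ne: "ms \<noteq> []" and L: "legal_I \<alpha> ms" by auto
  define l where "l = length ms - 1"
  have Ll: "length ms = Suc l" unfolding l_def using ne by simp
  have l: "l < length ms" using Ll by simp
  have tk: "take (Suc l) ms = ms" using Ll by simp
  let ?N = "A (Suc l)"
  have LSt: "fd_subspace F (FF ms t) \<and> FF ms t \<subseteq> X \<inter> tail_space e F (fst (ms ! bk t)) \<and> XX ms t \<noteq> 0 \<and>
     (\<exists>f. (\<forall>j\<le>t. f j \<in> FF ms j) \<and> XX ms t = (\<Sum>j\<le>t. f j))" if "t < ?N" for t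
    using LS[OF L] that Ll by simp
  have BasF: "finite (Bas (FF ms t)) \<and> FF ms t = spanF F (Bas (FF ms t))" if "t < ?N" for t
    using Bas LSt[OF that] by blast
  have fst_tau: "fst (\<tau> ms) = spanF F (\<Union>t\<in>{A l..<?N}. Bas (FF ms t))"
    using tau_fst[OF l] tk by simp
  have "finite (\<Union>t\<in>{A l..<?N}. Bas (FF ms t))"
    by (rule finite_UN_I) (use BasF in auto)
  then have a: "fd_subspace F (fst (\<tau> ms))"
    unfolding fst_tau fd_subspace_def by blast
  obtain S0 where S0: "X = spanF F S0" using Xspan by blast
  have U: "(\<Union>t\<in>{A l..<?N}. Bas (FF ms t)) \<subseteq> X \<inter> tail_space e F (fst (ms ! l))"
  proof
    fix v assume "v \<in> (\<Union>t\<in>{A l..<?N}. Bas (FF ms t))"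
    then obtain t where t: "A l \<le> t" "t < ?N" "v \<in> Bas (FF ms t)" by auto
    have "bk t = l" using t by (intro blk_eq) auto
    have "v \<in> FF ms t" using BasF[OF t(2)] t(3) spanF_base[OF subF] by blast
    then show "v \<in> X \<inter> tail_space e F (fst (ms ! l))" using LSt[OF t(2)] \<open>bk t = l\<close> by blast
  qed
  have b: "fst (\<tau> ms) \<subseteq> X \<inter> tail_space e F (fst (ms ! l))"
  proof -
    have "fst (\<tau> ms) \<subseteq> X" unfolding fst_tau S0
      by (rule spanF_span_sub[OF subF]) (use U S0 in blast)
    moreover have "fst (\<tau> ms) \<subseteq> tail_space e F (fst (ms ! l))" unfolding fst_tau tail_space_def
      by (rule spanF_span_sub[OF subF]) (use U in \<open>auto simp: tail_space_def\<close>)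
    ultimately show ?thesis by blast
  qed
  have c: "snd (\<tau> ms) \<noteq> 0"
  proof
    assume z0: "snd (\<tau> ms) = 0"
    obtain ms' where ms': "complete_I \<alpha> ms'" "take (length ms) ms' = ms" using completion[OF L ne] by blast
    have "min (length ms) (length ms') = Suc l" using arg_cong[OF ms'(2), of length] Ll by simp
    then have lms': "l < length ms'" by (simp add: min_def split: if_splits)
    have tk': "take (Suc l) ms' = ms" using ms'(2) Ll by simp
    have E: "equivK K (outcome \<tau> ms') (map z [0..<length ms'])" by (rule main_equiv[OF ms'(1)])
    define a where "a i = (if i = l then 1 else (0::real))" for i
    have "norm (\<Sum>i<length (map z [0..<length ms']). a i *\<^sub>R map z [0..<length ms'] ! i)
        \<le> K * norm (\<Sum>i<length (outcome \<tau> ms'). a i *\<^sub>R outcome \<tau> ms' ! i)"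
      using conjunct2[OF E[unfolded equivK_def], rule_format, of a] by (rule conjunct2)
    moreover have "(\<Sum>i<length (map z [0..<length ms']). a i *\<^sub>R map z [0..<length ms'] ! i) = z l"
      using lms' unfolding a_def by (simp add: sum_indicator_scale)
    moreover have "(\<Sum>i<length (outcome \<tau> ms'). a i *\<^sub>R outcome \<tau> ms' ! i) = outcome \<tau> ms' ! l"
      using lms' unfolding a_def by (simp add: outcome_def sum_indicator_scale del: nth_map_upt)
    moreover have "outcome \<tau> ms' ! l = snd (\<tau> ms)"
      using lms' tk' unfolding outcome_def by simp
    ultimately have "norm (z l) \<le> 0" using z0 by simp
    then show False using znz by simp
  qed
  have "\<forall>i. \<exists>g. i < ?N \<longrightarrow> (\<forall>t\<le>i. g t \<in> FF ms t) \<and> XX ms i = (\<Sum>t\<le>i. g t)"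
    using LSt by blast
  then obtain G where G: "\<And>i. i < ?N \<Longrightarrow> (\<forall>t\<le>i. G i t \<in> FF ms t) \<and> XX ms i = (\<Sum>t\<le>i. G i t)"
    by metis
  define h where "h i t = (if t \<in> {..i} then G i t else 0)" for i t
  define f where "f j = (\<Sum>i<?N. cc l i *\<^sub>R (\<Sum>t\<in>{A j..<A (Suc j)}. h i t))" for j
  have fmem: "f j \<in> fst (\<tau> (take (Suc j) ms))" if j: "j \<le> l" for j
  proof -
    have jl: "j < length ms" using j Ll by simp
    have AN: "A (Suc j) \<le> ?N" using j by (intro aseq_le) simp
    let ?U = "\<Union>t\<in>{A j..<A (Suc j)}. Bas (FF ms t)"
    have ft: "fst (\<tau> (take (Suc j) ms)) = spanF F ?U" by (rule tau_fst[OF jl])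
    have "h i t \<in> spanF F ?U" if t: "t \<in> {A j..<A (Suc j)}" and iN: "i < ?N" for i t
    proof (cases "t \<le> i")
      case True
      have tN: "t < ?N" using t AN by simp
      have "G i t \<in> FF ms t" using G[OF iN] True by blast
      also have "\<dots> = spanF F (Bas (FF ms t))" using BasF[OF tN] by blast
      also have "\<dots> \<subseteq> spanF F ?U" by (rule spanF_mono) (use t in blast)
      finally show ?thesis unfolding h_def using True by simp
    next
      case False then show ?thesis unfolding h_def by (simp add: spanF_zero)
    qed
    then show ?thesis unfolding ft f_def
      by (intro spanF_sum spanF_scale[OF subF] ccF[rule_format]) auto
  qed
  have fsum: "snd (\<tau> ms) = (\<Sum>j\<le>l. f j)"
  proof -
    have hs: "(\<Sum>t<?N. h i t) = XX ms i" if i: "i < ?N" for i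
    proof -
      have "(\<Sum>t<?N. h i t) = (\<Sum>t\<in>{..<?N} \<inter> {..i}. G i t)"
        unfolding h_def by (rule sum.inter_restrict[symmetric]) simp
      also have "{..<?N} \<inter> {..i} = {..i}" using i by auto
      finally show ?thesis using G[OF i] by simp
    qed
    have "(\<Sum>j\<le>l. f j) = (\<Sum>j<Suc l. \<Sum>i<?N. cc l i *\<^sub>R (\<Sum>t\<in>{A j..<A (Suc j)}. h i t))"
      unfolding f_def lessThan_Suc_atMost ..
    also have "\<dots> = (\<Sum>i<?N. \<Sum>j<Suc l. cc l i *\<^sub>R (\<Sum>t\<in>{A j..<A (Suc j)}. h i t))"
      by (rule sum.swap)
    also have "\<dots> = (\<Sum>i<?N. cc l i *\<^sub>R (\<Sum>j<Suc l. \<Sum>t\<in>{A j..<A (Suc j)}. h i t))"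
      by (simp only: scaleR_sum_right)
    also have "\<dots> = (\<Sum>i<?N. cc l i *\<^sub>R (\<Sum>t<?N. h i t))" by (simp only: blocks_sum)
    also have "\<dots> = (\<Sum>i<?N. cc l i *\<^sub>R XX ms i)" using hs by simp
    also have "\<dots> = snd (\<tau> ms)" using tau_snd[OF l] tk by simp
    finally show ?thesis by simp
  qed
  show "legal_II_answer e F X \<tau> ms"
    unfolding legal_II_answer_def Let_def
    using a b c fmem fsum tk unfolding l_def[symmetric] by auto
qed

end

context simset begin
lemma wins: "II_wins e F X \<alpha> (\<lambda>vs. equivK K vs (map z [0..<length vs]))"
  unfolding II_wins_def
proof (intro exI[of _ \<tau>] conjI allI impI)
  show "strategy_II e F X \<alpha> \<tau>" by (rule tau_strategy)
  fix ms assume "complete_I \<alpha> ms"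
  then show "equivK K (outcome \<tau> ms) (map z [0..<length (outcome \<tau> ms)])"
    using main_equiv by (simp add: outcome_def)
qed
end

theorem lemma4p5:
  fixes e :: "nat \<Rightarrow> 'a::banach" and F :: "real set"
    and X :: "'a set" and y :: "nat \<Rightarrow> 'a" and \<alpha> :: "'o rel" and K :: real
  assumes "schauder_basis e"
    and "countable F" and "subfield_real F"
    and "\<forall>m a. (\<forall>n. a n \<in> F) \<longrightarrow> norm (\<Sum>n\<le>m. a n *\<^sub>R e n) \<in> F"
    and "block_subspace e F X"
    and "block_seq e F y"
    and "Well_order \<alpha>" and "countable (Field \<alpha>)"
    and "K \<ge> 1"
    and "II_wins e F X (omega_times \<alpha>) (\<lambda>xs. equivK K xs (map y [0..<length xs]))"
  shows "\<forall>z. block_seq e F z \<and> range z \<subseteq> spanF F (range y) \<longrightarrow>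
           II_wins e F X \<alpha> (\<lambda>vs. equivK K vs (map z [0..<length vs]))"
proof (intro allI impI)
  fix z assume zz: "block_seq e F z \<and> range z \<subseteq> spanF F (range y)"
  obtain \<sigma> where \<sigma>: "strategy_II e F X (omega_times \<alpha>) \<sigma>"
    "\<forall>ms. complete_I (omega_times \<alpha>) ms \<longrightarrow> equivK K (outcome \<sigma> ms) (map y [0..<length (outcome \<sigma> ms)])"
    using assms(10) unfolding II_wins_def by blast
  have \<sigma>W: "\<forall>ms. complete_I (omega_times \<alpha>) ms \<longrightarrow> equivK K (outcome \<sigma> ms) (map y [0..<length ms])"
    using \<sigma>(2) by (simp add: outcome_def)
  have "\<forall>l. \<exists>c M. (\<forall>j. c j \<in> F) \<and> (\<forall>j\<ge>M. c j = 0) \<and> z l = (\<Sum>j<M. c j *\<^sub>R y j)"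
  proof
    fix l
    have "z l \<in> spanF F (range y)" using zz by blast
    then show "\<exists>c M. (\<forall>j. c j \<in> F) \<and> (\<forall>j\<ge>M. c j = 0) \<and> z l = (\<Sum>j<M. c j *\<^sub>R y j)"
      by (rule spanF_rep[OF assms(3)])
  qed
  then have "\<exists>cc. \<forall>l. \<exists>M. (\<forall>j. cc l j \<in> F) \<and> (\<forall>j\<ge>M. cc l j = 0) \<and> z l = (\<Sum>j<M. cc l j *\<^sub>R y j)"
    by (rule choice)
  then obtain cc where "\<forall>l. \<exists>M. (\<forall>j. cc l j \<in> F) \<and> (\<forall>j\<ge>M. cc l j = 0) \<and> z l = (\<Sum>j<M. cc l j *\<^sub>R y j)"
    by blast
  then have "\<exists>MM. \<forall>l. (\<forall>j. cc l j \<in> F) \<and> (\<forall>j\<ge>MM l. cc l j = 0) \<and> z l = (\<Sum>j<MM l. cc l j *\<^sub>R y j)"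
    by (rule choice)
  then obtain MM where MM: "\<forall>l. (\<forall>j. cc l j \<in> F) \<and> (\<forall>j\<ge>MM l. cc l j = 0) \<and> z l = (\<Sum>j<MM l. cc l j *\<^sub>R y j)"
    by blast
  have Xs: "\<exists>S. X = spanF F S" using assms(5) unfolding block_subspace_def by blast
  have znz: "\<forall>l. z l \<noteq> 0" using zz unfolding block_seq_def by blast
  interpret S: simset e F X \<alpha> \<sigma> y z cc MM K
  proof
    show "subfield_real F" by (rule assms(3))
    show "\<exists>S. X = spanF F S" by (rule Xs)
    show "Well_order \<alpha>" by (rule assms(7))
    show "strategy_II e F X (omega_times \<alpha>) \<sigma>" by (rule \<sigma>(1))
    show "\<forall>ms. complete_I (omega_times \<alpha>) ms \<longrightarrow> equivK K (outcome \<sigma> ms) (map y [0..<length ms])" by (rule \<sigma>W)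
    show "\<forall>l j. cc l j \<in> F" using MM by blast
    show "\<forall>l j. MM l \<le> j \<longrightarrow> cc l j = 0" using MM by blast
    show "\<forall>l. z l = (\<Sum>j<MM l. cc l j *\<^sub>R y j)" using MM by blast
    show "\<forall>l. z l \<noteq> 0" by (rule znz)
    show "K > 0" using assms(9) by simp
  qed
  show "II_wins e F X \<alpha> (\<lambda>vs. equivK K vs (map z [0..<length vs]))" by (rule S.wins)
qed

end
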